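(* Let $I\subset\mathbb{R}$ be an interval and $(Y(s))_{s\in I}$ a centered Gaussian process whose covariance $r(s,t)=\mathbb{E}[Y(s)Y(t)]$ admits partial derivatives $r^{(a,b)}=\partial_1^a\partial_2^b r$ for $a,b\in\{0,1\}$ (so that $r^{(a,b)}(s,t)=\mathbb{E}[Y^{(a)}(s)Y^{(b)}(t)]$). Assume there is a constant $C$ with $|r^{(a,b)}(s,t)|\le C$ for all $a,b\in\{0,1\}$ and $s,t\in I$. Then for all $s,\tau$ with $s,s+\tau\in I$, \[\big|\det\Sigma(s,s+\tau)-\det\Omega(s)\,\det\Omega(s+\tau)\big|\le 20\,C^2M(\tau)^2 .\]
   Context: $\Omega(s)=\operatorname{Cov}(Y(s),Y'(s))$ is the $2\times2$ covariance matrix, with entries $r(s,s)$, $r^{(1,0)}(s,s)$, $r^{(1,1)}(s,s)$. $\Sigma(s,t)=\operatorname{Cov}(Y(s),Y(t),Y'(s),Y'(t))$ is the $4\times 4$ covariance matrix of this vector (entries given by the appropriate $r^{(a,b)}$). $M(\tau)=\sup_{s}\sup_{a,b\in\{0,1\}}|r^{(a,b)}(s,s+\tau)|$, the supremum over $s$ with $s,s+\tau\in I$. *)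

theory Defs
  imports "HOL-Probability.Probability"
begin

definition gaussian_process :: "'a measure \<Rightarrow> real set \<Rightarrow> (real \<Rightarrow> 'a \<Rightarrow> real) \<Rightarrow> bool" where
  "gaussian_process M I Y \<longleftrightarrow>
     (\<forall>t\<in>I. Y t \<in> borel_measurable M) \<and>
     (\<forall>F c. finite F \<longrightarrow> F \<subseteq> I \<longrightarrow>
        (\<exists>a. AE \<omega> in M. (\<Sum>t\<in>F. c t * Y t \<omega>) = a) \<or>
        (\<exists>\<mu> \<sigma>. \<sigma> > 0 \<and> distributed M lborel (\<lambda>\<omega>. \<Sum>t\<in>F. c t * Y t \<omega>) (normal_density \<mu> \<sigma>)))"

text \<open>Here rd a b is the covariance derivative r^{(a,b)} (a,b in {0,1}).
  Omega(s) = Cov(Y(s),Y'(s)).\<close>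
definition Omega :: "(nat \<Rightarrow> nat \<Rightarrow> real \<Rightarrow> real \<Rightarrow> real) \<Rightarrow> real \<Rightarrow> real^2^2" where
  "Omega rd s = vector [vector [rd 0 0 s s, rd 0 1 s s],
                        vector [rd 1 0 s s, rd 1 1 s s]]"

text \<open>Sigma(s,t) = Cov(Y(s),Y(t),Y'(s),Y'(t)).\<close>
definition Sigma :: "(nat \<Rightarrow> nat \<Rightarrow> real \<Rightarrow> real \<Rightarrow> real) \<Rightarrow> real \<Rightarrow> real \<Rightarrow> real^4^4" where
  "Sigma rd s t = vector
     [vector [rd 0 0 s s, rd 0 0 s t, rd 0 1 s s, rd 0 1 s t],
      vector [rd 0 0 t s, rd 0 0 t t, rd 0 1 t s, rd 0 1 t t],
      vector [rd 1 0 s s, rd 1 0 s t, rd 1 1 s s, rd 1 1 s t],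
      vector [rd 1 0 t s, rd 1 0 t t, rd 1 1 t s, rd 1 1 t t]]"

definition Mtau :: "(nat \<Rightarrow> nat \<Rightarrow> real \<Rightarrow> real \<Rightarrow> real) \<Rightarrow> real set \<Rightarrow> real \<Rightarrow> real" where
  "Mtau rd I \<tau> = Sup {\<bar>rd a b s (s + \<tau>)\<bar> | a b s. a \<le> 1 \<and> b \<le> 1 \<and> s \<in> I \<and> s + \<tau> \<in> I}"

end

theory Submission
  imports Defs
begin


definition sqi :: "'a measure \<Rightarrow> ('a \<Rightarrow> real) \<Rightarrow> bool" where
  "sqi M f \<longleftrightarrow> f \<in> borel_measurable M \<and> integrable M (\<lambda>x. (f x)\<^sup>2)"

definition ip :: "'a measure \<Rightarrow> ('a \<Rightarrow> real) \<Rightarrow> ('a \<Rightarrow> real) \<Rightarrow> real" where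
  "ip M f g = (\<integral>x. f x * g x \<partial>M)"

lemma sqi_prod:
  assumes "sqi M f" "sqi M g"
  shows "integrable M (\<lambda>x. f x * g x)"
proof (rule Bochner_Integration.integrable_bound[of M "\<lambda>x. (f x)\<^sup>2 + (g x)\<^sup>2"])
  show "integrable M (\<lambda>x. (f x)\<^sup>2 + (g x)\<^sup>2)" using assms unfolding sqi_def by auto
  show "(\<lambda>x. f x * g x) \<in> borel_measurable M" using assms unfolding sqi_def by auto
  have "\<bar>f x * g x\<bar> \<le> \<bar>(f x)\<^sup>2 + (g x)\<^sup>2\<bar>" for x
  proof -
    have "0 \<le> (\<bar>f x\<bar> - \<bar>g x\<bar>)\<^sup>2" by simp
    then have "2 * \<bar>f x\<bar> * \<bar>g x\<bar> \<le> (f x)\<^sup>2 + (g x)\<^sup>2"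
      by (simp add: power2_eq_square algebra_simps)
    moreover have "0 \<le> \<bar>f x\<bar> * \<bar>g x\<bar>" by simp
    moreover have "\<bar>f x * g x\<bar> = \<bar>f x\<bar> * \<bar>g x\<bar>" by (rule abs_mult)
    moreover have "\<bar>(f x)\<^sup>2 + (g x)\<^sup>2\<bar> = (f x)\<^sup>2 + (g x)\<^sup>2" by simp
    ultimately show ?thesis by linarith
  qed
  then show "AE x in M. norm (f x * g x) \<le> norm ((f x)\<^sup>2 + (g x)\<^sup>2)" by simp
qed

lemma sqi_add: "sqi M f \<Longrightarrow> sqi M g \<Longrightarrow> sqi M (\<lambda>x. f x + g x)"
proof -
  assume a: "sqi M f" "sqi M g"
  have "integrable M (\<lambda>x. (f x)\<^sup>2 + 2 * (f x * g x) + (g x)\<^sup>2)"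
    using a sqi_prod[OF a] unfolding sqi_def by auto
  moreover have "(\<lambda>x. (f x)\<^sup>2 + 2 * (f x * g x) + (g x)\<^sup>2) = (\<lambda>x. (f x + g x)\<^sup>2)"
    by (auto simp: power2_eq_square algebra_simps)
  ultimately show ?thesis using a unfolding sqi_def by auto
qed

lemma sqi_scale: "sqi M f \<Longrightarrow> sqi M (\<lambda>x. c * f x)"
proof -
  assume a: "sqi M f"
  have "integrable M (\<lambda>x. c\<^sup>2 * (f x)\<^sup>2)" using a unfolding sqi_def by auto
  moreover have "(\<lambda>x. c\<^sup>2 * (f x)\<^sup>2) = (\<lambda>x. (c * f x)\<^sup>2)"
    by (auto simp: power2_eq_square algebra_simps)
  ultimately show ?thesis using a unfolding sqi_def by auto
qed

lemma sqi_diff: "sqi M f \<Longrightarrow> sqi M g \<Longrightarrow> sqi M (\<lambda>x. f x - g x)"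
  using sqi_add[of M f "\<lambda>x. (-1) * g x"] sqi_scale[of M g "-1"] by simp

lemma sqi_divide: "sqi M f \<Longrightarrow> sqi M (\<lambda>x. f x / c)"
  using sqi_scale[of M f "1/c"] by simp

lemma sqi_sum: "(\<And>j. j \<in> F \<Longrightarrow> sqi M (f j)) \<Longrightarrow> sqi M (\<lambda>x. \<Sum>j\<in>F. f j x)"
proof (induction F rule: infinite_finite_induct)
  case (infinite A) then show ?case by (simp add: sqi_def)
next
  case empty then show ?case by (simp add: sqi_def)
next
  case (insert a A) then show ?case by (simp add: sqi_add)
qed

lemma ip_nonneg: "0 \<le> ip M f f"
  unfolding ip_def by (rule integral_nonneg_AE) auto

lemma ip_comm: "ip M f g = ip M g f"
  unfolding ip_def by (simp add: mult.commute)

lemma ip_sum_left: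
  assumes "\<And>j. j \<in> F \<Longrightarrow> sqi M (f j)" "sqi M g" "finite F"
  shows "ip M (\<lambda>x. \<Sum>j\<in>F. c j * f j x) g = (\<Sum>j\<in>F. c j * ip M (f j) g)"
proof -
  have "ip M (\<lambda>x. \<Sum>j\<in>F. c j * f j x) g = (\<integral>x. (\<Sum>j\<in>F. c j * (f j x * g x)) \<partial>M)"
    unfolding ip_def by (simp add: sum_distrib_right mult.assoc)
  also have "\<dots> = (\<Sum>j\<in>F. c j * ip M (f j) g)"
    unfolding ip_def using assms by (subst Bochner_Integration.integral_sum) (simp_all add: sqi_prod)
  finally show ?thesis .
qed

lemma ip_quad:
  assumes "sqi M f1" "sqi M f2" "sqi M g1" "sqi M g2"
  shows "ip M (\<lambda>x. (f1 x - f2 x) / h) (\<lambda>x. (g1 x - g2 x) / k) =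
    (ip M f1 g1 - ip M f1 g2 - ip M f2 g1 + ip M f2 g2) / (h * k)"
proof -
  have "(\<lambda>x. (f1 x - f2 x) / h * ((g1 x - g2 x) / k)) =
        (\<lambda>x. (f1 x * g1 x - f1 x * g2 x - f2 x * g1 x + f2 x * g2 x) / (h * k))"
    by (auto simp: field_simps)
  then show ?thesis unfolding ip_def
    using sqi_prod[OF assms(1,3)] sqi_prod[OF assms(1,4)] sqi_prod[OF assms(2,3)] sqi_prod[OF assms(2,4)]
    by simp
qed

lemma ip_parallelogram:
  assumes "sqi M u" "sqi M v"
  shows "ip M (\<lambda>x. u x - v x) (\<lambda>x. u x - v x) =
    2 * ip M u u + 2 * ip M v v - 4 * ip M (\<lambda>x. (u x + v x) / 2) (\<lambda>x. (u x + v x) / 2)"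
proof -
  have e: "(\<lambda>x. (u x - v x) * (u x - v x)) =
     (\<lambda>x. 2 * (u x * u x) + 2 * (v x * v x) - 4 * ((u x + v x) / 2 * ((u x + v x) / 2)))"
    by (auto simp: field_simps power2_eq_square)
  have i3: "integrable M (\<lambda>x. (u x + v x) / 2 * ((u x + v x) / 2))"
    using sqi_prod sqi_divide sqi_add assms by blast
  have i1: "integrable M (\<lambda>x. u x * u x)" "integrable M (\<lambda>x. v x * v x)"
    using sqi_prod[OF assms(1,1)] sqi_prod[OF assms(2,2)] by auto
  have "(\<integral>x. 2 * (u x * u x) + 2 * (v x * v x) - 4 * ((u x + v x) / 2 * ((u x + v x) / 2)) \<partial>M)
     = (\<integral>x. 2 * (u x * u x) + 2 * (v x * v x) \<partial>M) - (\<integral>x. 4 * ((u x + v x) / 2 * ((u x + v x) / 2)) \<partial>M)"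
  proof (rule Bochner_Integration.integral_diff)
    show "integrable M (\<lambda>x. 2 * (u x * u x) + 2 * (v x * v x))" using i1 by (intro Bochner_Integration.integrable_add integrable_mult_right)
    show "integrable M (\<lambda>x. 4 * ((u x + v x) / 2 * ((u x + v x) / 2)))" using i3 by (intro integrable_mult_right)
  qed
  also have "\<dots> = 2 * (\<integral>x. u x * u x \<partial>M) + 2 * (\<integral>x. v x * v x \<partial>M) - 4 * (\<integral>x. (u x + v x) / 2 * ((u x + v x) / 2) \<partial>M)"
    using i1 i3 by (subst Bochner_Integration.integral_add) (auto intro: integrable_mult_right)
  finally show ?thesis unfolding ip_def e .
qed

lemma discr:
  fixes A B Cc :: real
  assumes "\<And>l. 0 \<le> A - 2 * l * B + l\<^sup>2 * Cc" "0 \<le> Cc"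
  shows "B\<^sup>2 \<le> A * Cc"
proof (cases "Cc = 0")
  case True
  have "B = 0"
  proof (rule ccontr)
    assume "B \<noteq> 0"
    have "0 \<le> A - 2 * ((A + 1) / (2 * B)) * B" using assms(1)[of "(A + 1) / (2 * B)"] True by simp
    also have "\<dots> = -1" using \<open>B \<noteq> 0\<close> by (simp add: field_simps)
    finally show False by simp
  qed
  then show ?thesis using True by simp
next
  case False
  then have "Cc > 0" using assms(2) by simp
  have "0 \<le> A - 2 * (B / Cc) * B + (B / Cc)\<^sup>2 * Cc" by (rule assms(1))
  also have "\<dots> = (A * Cc - B\<^sup>2) / Cc" using \<open>Cc > 0\<close> by (simp add: field_simps power2_eq_square)
  finally show ?thesis using \<open>Cc > 0\<close> by (simp add: zero_le_divide_iff)
qed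

lemma ip_CS:
  assumes "sqi M f" "sqi M g"
  shows "(ip M f g)\<^sup>2 \<le> ip M f f * ip M g g"
proof (rule discr[OF _ ip_nonneg])
  fix l :: real
  have "ip M (\<lambda>x. f x - l * g x) (\<lambda>x. f x - l * g x) = ip M f f - 2 * l * ip M f g + l\<^sup>2 * ip M g g"
  proof -
    have e: "(\<lambda>x. (f x - l * g x) * (f x - l * g x)) = (\<lambda>x. f x * f x - 2 * l * (f x * g x) + l\<^sup>2 * (g x * g x))"
      by (auto simp: algebra_simps power2_eq_square)
    show ?thesis unfolding ip_def e using sqi_prod[OF assms(1,1)] sqi_prod[OF assms(1,2)] sqi_prod[OF assms(2,2)]
      by simp
  qed
  then show "0 \<le> ip M f f - 2 * l * ip M f g + l\<^sup>2 * ip M g g" using ip_nonneg by metis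
qed

lemma ip_CS_abs:
  assumes "sqi M f" "sqi M g" "ip M f f \<le> P" "ip M g g \<le> Q"
  shows "\<bar>ip M f g\<bar> \<le> sqrt (P * Q)"
proof -
  have "(ip M f g)\<^sup>2 \<le> P * Q"
    using ip_CS[OF assms(1,2)] assms(3,4) ip_nonneg[of M f] ip_nonneg[of M g]
    by (meson mult_mono order_trans)
  then show ?thesis using real_le_rsqrt by (metis real_sqrt_abs real_sqrt_le_iff)
qed


lemma sum_trunc:
  fixes f :: "nat \<Rightarrow> real"
  assumes "n \<le> k"
  shows "(\<Sum>j<k. if j < n then f j else 0) = (\<Sum>j<n. f j)"
proof -
  have "(\<Sum>j<k. if j < n then f j else 0) = (\<Sum>j<k. if j \<in> {..<n} then f j else 0)" by simp
  also have "\<dots> = sum f ({..<k} \<inter> {..<n})" by (rule sum.inter_restrict[symmetric]) simp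
  also have "{..<k} \<inter> {..<n} = {..<n}" using assms by auto
  finally show ?thesis .
qed

lemma conv_close:
  fixes l h :: "nat \<Rightarrow> real"
  assumes "\<forall>j. 0 \<le> l j" "\<forall>j<N. l j = 0" "sum l {..<n} = 1" "\<forall>j\<ge>N. \<bar>h j - c\<bar> \<le> e"
  shows "\<bar>(\<Sum>j<n. l j * h j) - c\<bar> \<le> e"
proof -
  have "(\<Sum>j<n. l j * (h j - c)) = (\<Sum>j<n. l j * h j) - c * sum l {..<n}"
    by (simp add: algebra_simps sum_subtractf sum_distrib_left)
  then have "(\<Sum>j<n. l j * h j) - c = (\<Sum>j<n. l j * (h j - c))"
    using assms(3) by simp
  also have "\<bar>\<dots>\<bar> \<le> (\<Sum>j<n. \<bar>l j * (h j - c)\<bar>)" by (rule sum_abs)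
  also have "\<dots> \<le> (\<Sum>j<n. l j * e)"
  proof (rule sum_mono)
    fix j assume "j \<in> {..<n}"
    show "\<bar>l j * (h j - c)\<bar> \<le> l j * e"
    proof (cases "j < N")
      case True then show ?thesis using assms(2) by simp
    next
      case False then show ?thesis using assms(1,4) by (simp add: abs_mult mult_left_mono)
    qed
  qed
  also have "\<dots> = e" using assms(3) by (simp add: sum_distrib_right[symmetric])
  finally show ?thesis .
qed

lemma ip_diff_left:
  assumes "sqi M u" "sqi M v" "sqi M g"
  shows "ip M (\<lambda>x. u x - v x) g = ip M u g - ip M v g"
proof -
  have "(\<lambda>x. (u x - v x) * g x) = (\<lambda>x. u x * g x - v x * g x)" by (auto simp: algebra_simps)
  then show ?thesis unfolding ip_def using sqi_prod[OF assms(1,3)] sqi_prod[OF assms(2,3)] by simp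
qed

lemma core:
  fixes M :: "'a measure" and a b :: "nat \<Rightarrow> 'a \<Rightarrow> real" and A B :: "nat \<Rightarrow> real"
  assumes sa: "\<And>n. sqi M (a n)" and sb: "\<And>m. sqi M (b m)"
    and ba: "\<And>n. ip M (a n) (a n) \<le> R" and bb: "\<And>m. ip M (b m) (b m) \<le> R"
    and lA: "\<And>n. (\<lambda>m. ip M (a n) (b m)) \<longlonglongrightarrow> A n" and lA1: "A \<longlonglongrightarrow> L1"
    and lB: "\<And>m. (\<lambda>n. ip M (a n) (b m)) \<longlonglongrightarrow> B m" and lB1: "B \<longlonglongrightarrow> L2"
  shows "L1 = L2"
proof -
  define vec where "vec = (\<lambda>(l::nat\<Rightarrow>real, n::nat) \<omega>. \<Sum>j<n. l j * a j \<omega>)"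
  define cc where "cc = (\<lambda>N::nat. {(l::nat\<Rightarrow>real, n::nat). (\<forall>j. 0 \<le> l j) \<and> (\<forall>j<N. l j = 0) \<and> sum l {..<n} = 1})"
  define nrm where "nrm = (\<lambda>p. ip M (vec p) (vec p))"
  define mN where "mN = (\<lambda>N. Inf (nrm ` cc N))"
  have svec: "sqi M (vec p)" for p
    by (cases p) (auto simp: vec_def intro!: sqi_sum sqi_scale sa)
  have ipvec: "ip M (vec (l,n)) g = (\<Sum>j<n. l j * ip M (a j) g)" if "sqi M g" for l n g
    unfolding vec_def using ip_sum_left[of "{..<n}" M a g l] sa that by simp
  have R0: "0 \<le> R" using ba[of 0] ip_nonneg[of M "a 0"] by linarith
  define e where "e = (\<lambda>N. (\<lambda>j::nat. if j = N then 1 else (0::real), Suc N))"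
  have e_cc: "e N \<in> cc N" for N unfolding e_def cc_def by auto
  have e_vec: "vec (e N) = a N" for N
  proof
    fix \<omega>
    have "(\<Sum>j<Suc N. (if j = N then 1 else 0) * a j \<omega>) = (\<Sum>j<Suc N. if j = N then a j \<omega> else 0)"
      by (rule sum.cong) auto
    also have "\<dots> = a N \<omega>" by (subst sum.delta) auto
    finally show "vec (e N) \<omega> = a N \<omega>" unfolding e_def vec_def by simp
  qed
  have ne: "nrm ` cc N \<noteq> {}" for N using e_cc by auto
  have bdd: "bdd_below (nrm ` cc N)" for N by (rule bdd_belowI[of _ 0]) (auto simp: nrm_def ip_nonneg)
  have mN_le: "mN N \<le> nrm p" if "p \<in> cc N" for N p
    using cInf_lower[OF imageI[OF that] bdd] unfolding mN_def by simp
  have mN_R: "mN N \<le> R" for N using mN_le[OF e_cc, of N] ba[of N] unfolding nrm_def e_vec by simp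
  have cc_mono: "cc N' \<subseteq> cc N" if "N \<le> N'" for N N' unfolding cc_def using that by auto
  have mN_mono: "mN N \<le> mN N'" if "N \<le> N'" for N N'
    unfolding mN_def by (rule cInf_superset_mono[OF ne bdd image_mono[OF cc_mono[OF that]]])
  have "\<exists>p. p \<in> cc N \<and> nrm p < mN N + 1 / real (Suc N)" for N
  proof -
    have "Inf (nrm ` cc N) < mN N + 1 / real (Suc N)" unfolding mN_def by simp
    from cInf_lessD[OF ne this] show ?thesis by auto
  qed
  then obtain P where P: "\<And>N. P N \<in> cc N" "\<And>N. nrm (P N) < mN N + 1 / real (Suc N)" by metis
  define mL where "mL = (SUP N. mN N)"
  have bddA: "bdd_above (range mN)" by (rule bdd_aboveI[of _ R]) (auto simp: mN_R)
  have mN_mL: "mN N \<le> mL" for N unfolding mL_def by (rule cSUP_upper[OF _ bddA]) simp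
  have mN_lim: "mN \<longlonglongrightarrow> mL" unfolding mL_def
    by (rule LIMSEQ_incseq_SUP[OF bddA]) (simp add: incseq_def mN_mono)
  define x where "x = (\<lambda>N. vec (P N))"
  have sx: "sqi M (x N)" for N unfolding x_def by (rule svec)
  define d where "d = (\<lambda>N. 2 * (mL - mN N) + 4 * inverse (real (Suc N)))"
  have midpoint: "\<exists>r\<in>cc N. vec r = (\<lambda>\<omega>. (x N \<omega> + x N' \<omega>) / 2)" if "N \<le> N'" for N N'
  proof -
    obtain l n where ln: "P N = (l, n)" by fastforce
    obtain l' n' where ln': "P N' = (l', n')" by fastforce
    have c1: "(l, n) \<in> cc N" and c2: "(l', n') \<in> cc N'" using P(1)[of N] P(1)[of N'] ln ln' by auto
    define r where "r = (\<lambda>j. (if j < n then l j else 0) / 2 + (if j < n' then l' j else 0) / 2, max n n')"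
    have "r \<in> cc N"
    proof -
      have "(\<Sum>j<max n n'. (if j < n then l j else 0) / 2 + (if j < n' then l' j else 0) / 2)
         = (\<Sum>j<max n n'. (if j < n then l j else 0)) / 2 + (\<Sum>j<max n n'. (if j < n' then l' j else 0)) / 2"
        by (simp add: sum.distrib sum_divide_distrib)
      also have "\<dots> = (\<Sum>j<n. l j) / 2 + (\<Sum>j<n'. l' j) / 2"
        by (simp add: sum_trunc)
      also have "\<dots> = 1" using c1 c2 unfolding cc_def by simp
      finally show ?thesis using c1 c2 that unfolding cc_def r_def by auto
    qed
    moreover have "vec r = (\<lambda>\<omega>. (x N \<omega> + x N' \<omega>) / 2)"
    proof
      fix \<omega>
      have "vec r \<omega> = (\<Sum>j<max n n'. ((if j < n then l j else 0) / 2 + (if j < n' then l' j else 0) / 2) * a j \<omega>)"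
        unfolding r_def vec_def by simp
      also have "\<dots> = (\<Sum>j<max n n'. (if j < n then l j * a j \<omega> else 0)) / 2 + (\<Sum>j<max n n'. (if j < n' then l' j * a j \<omega> else 0)) / 2"
        by (simp add: sum.distrib sum_divide_distrib distrib_right if_distrib[of "\<lambda>z. z * a _ \<omega>"] cong: if_cong)
      also have "\<dots> = (\<Sum>j<n. l j * a j \<omega>) / 2 + (\<Sum>j<n'. l' j * a j \<omega>) / 2"
        by (simp add: sum_trunc)
      also have "\<dots> = (x N \<omega> + x N' \<omega>) / 2" unfolding x_def ln ln' vec_def by simp
      finally show "vec r \<omega> = (x N \<omega> + x N' \<omega>) / 2" .
    qed
    ultimately show ?thesis by blast
  qed
  have dist: "ip M (\<lambda>\<omega>. x N \<omega> - x N' \<omega>) (\<lambda>\<omega>. x N \<omega> - x N' \<omega>) \<le> d N" if NN: "N \<le> N'" for N N'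
  proof -
    obtain r where r: "r \<in> cc N" "vec r = (\<lambda>\<omega>. (x N \<omega> + x N' \<omega>) / 2)" using midpoint[OF NN] by blast
    have m1: "mN N \<le> ip M (\<lambda>\<omega>. (x N \<omega> + x N' \<omega>) / 2) (\<lambda>\<omega>. (x N \<omega> + x N' \<omega>) / 2)"
      using mN_le[OF r(1)] r(2) unfolding nrm_def by simp
    have m2: "ip M (x N) (x N) < mN N + 1 / real (Suc N)" using P(2)[of N] unfolding x_def nrm_def .
    have m3: "ip M (x N') (x N') < mN N' + 1 / real (Suc N')" using P(2)[of N'] unfolding x_def nrm_def .
    have "1 / real (Suc N') \<le> 1 / real (Suc N)" using NN by (simp add: frac_le)
    moreover have "mN N' \<le> mL" by (rule mN_mL)
    ultimately show ?thesis unfolding ip_parallelogram[OF sx sx] d_def using m1 m2 m3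
      by (simp add: inverse_eq_divide)
  qed
  have close1: "\<bar>ip M (x N) (b k) - ip M (x N') (b k)\<bar> \<le> sqrt (d N * R)" if "N \<le> N'" for N N' k
  proof -
    have "ip M (x N) (b k) - ip M (x N') (b k) = ip M (\<lambda>\<omega>. x N \<omega> - x N' \<omega>) (b k)"
      by (rule ip_diff_left[OF sx sx sb, symmetric])
    also have "\<bar>\<dots>\<bar> \<le> sqrt (d N * R)"
      by (rule ip_CS_abs[OF sqi_diff[OF sx sx] sb dist[OF that] bb])
    finally show ?thesis .
  qed
  have xform: "ip M (x N) g = (\<Sum>j<snd (P N). fst (P N) j * ip M (a j) g)" if "sqi M g" for N g
    unfolding x_def using ipvec[OF that, of "fst (P N)" "snd (P N)"] by simp
  have Pcc: "(\<forall>j. 0 \<le> fst (P N) j) \<and> (\<forall>j<N. fst (P N) j = 0) \<and> sum (fst (P N)) {..<snd (P N)} = 1" for N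
    using P(1)[of N] unfolding cc_def by (cases "P N") auto
  have xb_lim: "(\<lambda>N'. ip M (x N') (b k)) \<longlonglongrightarrow> B k" for k
  proof (rule LIMSEQ_I)
    fix r :: real assume "0 < r"
    then have "r / 2 > 0" by simp
    from LIMSEQ_D[OF lB[of k] this] obtain J where J: "\<And>j. j \<ge> J \<Longrightarrow> norm (ip M (a j) (b k) - B k) < r / 2" by blast
    show "\<exists>no. \<forall>n\<ge>no. norm (ip M (x n) (b k) - B k) < r"
    proof (intro exI allI impI)
      fix n assume "n \<ge> J"
      have "\<bar>(\<Sum>j<snd (P n). fst (P n) j * ip M (a j) (b k)) - B k\<bar> \<le> r / 2"
      proof -
        have "\<forall>j\<ge>n. \<bar>ip M (a j) (b k) - B k\<bar> \<le> r / 2"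
          using J \<open>n \<ge> J\<close> by (auto intro: less_imp_le)
        then show ?thesis using Pcc[of n] conv_close[of "fst (P n)" n "snd (P n)" "\<lambda>j. ip M (a j) (b k)" "B k" "r / 2"] by blast
      qed
      then show "norm (ip M (x n) (b k) - B k) < r" using xform[OF sb] \<open>r > 0\<close> by simp
    qed
  qed
  have bound_xN: "\<bar>ip M (x N) (b k) - B k\<bar> \<le> sqrt (d N * R)" for N k
  proof (rule LIMSEQ_le_const2)
    show "(\<lambda>N'. \<bar>ip M (x N) (b k) - ip M (x N') (b k)\<bar>) \<longlonglongrightarrow> \<bar>ip M (x N) (b k) - B k\<bar>"
      by (intro tendsto_intros xb_lim)
    show "\<exists>N0. \<forall>n\<ge>N0. \<bar>ip M (x N) (b k) - ip M (x n) (b k)\<bar> \<le> sqrt (d N * R)"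
      using close1 by blast
  qed
  define \<alpha> where "\<alpha> = (\<lambda>N. \<Sum>j<snd (P N). fst (P N) j * A j)"
  have alim: "(\<lambda>k. ip M (x N) (b k)) \<longlonglongrightarrow> \<alpha> N" for N
    unfolding xform[OF sb] \<alpha>_def by (intro tendsto_intros lA)
  have aL2: "\<bar>\<alpha> N - L2\<bar> \<le> sqrt (d N * R)" for N
  proof (rule LIMSEQ_le_const2)
    show "(\<lambda>k. \<bar>ip M (x N) (b k) - B k\<bar>) \<longlonglongrightarrow> \<bar>\<alpha> N - L2\<bar>"
      by (intro tendsto_intros alim lB1)
    show "\<exists>N0. \<forall>n\<ge>N0. \<bar>ip M (x N) (b n) - B n\<bar> \<le> sqrt (d N * R)" using bound_xN by blast
  qed
  have d0: "d \<longlonglongrightarrow> 0"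
  proof -
    have "(\<lambda>N. 2 * (mL - mN N) + 4 * inverse (real (Suc N))) \<longlonglongrightarrow> 2 * (mL - mL) + 4 * 0"
      by (intro tendsto_intros mN_lim LIMSEQ_inverse_real_of_nat)
    then show ?thesis unfolding d_def by simp
  qed
  have s0: "(\<lambda>N. sqrt (d N * R)) \<longlonglongrightarrow> 0"
  proof -
    have "(\<lambda>N. sqrt (d N * R)) \<longlonglongrightarrow> sqrt (0 * R)" by (intro tendsto_intros d0)
    then show ?thesis by simp
  qed
  have "\<bar>L1 - L2\<bar> \<le> 0 + \<epsilon>" if "\<epsilon> > 0" for \<epsilon>
  proof -
    have h: "\<epsilon> / 2 > 0" using that by simp
    from LIMSEQ_D[OF lA1 h] obtain J1 where J1: "\<And>j. j \<ge> J1 \<Longrightarrow> norm (A j - L1) < \<epsilon> / 2" by blast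
    from LIMSEQ_D[OF s0 h] obtain J2 where J2: "\<And>j. j \<ge> J2 \<Longrightarrow> norm (sqrt (d j * R) - 0) < \<epsilon> / 2" by blast
    define N where "N = max J1 J2"
    have "\<bar>\<alpha> N - L1\<bar> \<le> \<epsilon> / 2"
    proof -
      have "\<forall>j\<ge>N. \<bar>A j - L1\<bar> \<le> \<epsilon> / 2"
        using J1 unfolding N_def by (auto intro: less_imp_le)
      then show ?thesis unfolding \<alpha>_def using Pcc[of N] conv_close[of "fst (P N)" N "snd (P N)" A L1 "\<epsilon> / 2"] by blast
    qed
    moreover have "sqrt (d N * R) < \<epsilon> / 2" using J2[of N] unfolding N_def by simp
    ultimately show ?thesis using aL2[of N] by linarith
  qed
  then have "\<bar>L1 - L2\<bar> \<le> 0" by (rule field_le_epsilon)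
  then show ?thesis by simp
qed

lemma gauss_sqi:
  assumes "prob_space M" "gaussian_process M I Y" "t \<in> I"
  shows "sqi M (Y t)"
proof -
  have meas: "Y t \<in> borel_measurable M" using assms unfolding gaussian_process_def by auto
  have "(\<exists>a. AE \<omega> in M. (\<Sum>u\<in>{t}. 1 * Y u \<omega>) = a) \<or>
        (\<exists>\<mu> \<sigma>. \<sigma> > 0 \<and> distributed M lborel (\<lambda>\<omega>. \<Sum>u\<in>{t}. 1 * Y u \<omega>) (normal_density \<mu> \<sigma>))"
  proof -
    have G: "\<forall>F c. finite F \<longrightarrow> F \<subseteq> I \<longrightarrow>
        (\<exists>a. AE \<omega> in M. (\<Sum>t\<in>F. c t * Y t \<omega>) = a) \<or>
        (\<exists>\<mu> \<sigma>. \<sigma> > 0 \<and> distributed M lborel (\<lambda>\<omega>. \<Sum>t\<in>F. c t * Y t \<omega>) (normal_density \<mu> \<sigma>))"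
      using assms(2) unfolding gaussian_process_def by (elim conjE)
    show ?thesis using G[rule_format, of "{t}" "\<lambda>_. 1"] assms(3) by simp
  qed
  then have "(\<exists>a. AE \<omega> in M. Y t \<omega> = a) \<or>
        (\<exists>\<mu> \<sigma>. \<sigma> > 0 \<and> distributed M lborel (Y t) (normal_density \<mu> \<sigma>))"
    by simp
  then have "integrable M (\<lambda>\<omega>. (Y t \<omega>)\<^sup>2)"
  proof
    assume "\<exists>a. AE \<omega> in M. Y t \<omega> = a"
    then obtain a where a: "AE \<omega> in M. Y t \<omega> = a" by blast
    interpret prob_space M by (rule assms(1))
    have "AE \<omega> in M. (Y t \<omega>)\<^sup>2 = a\<^sup>2" using a by eventually_elim simp
    then show ?thesis using meas by (subst integrable_cong_AE[where g = "\<lambda>_. a\<^sup>2"]) auto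
  next
    assume "\<exists>\<mu> \<sigma>. \<sigma> > 0 \<and> distributed M lborel (Y t) (normal_density \<mu> \<sigma>)"
    then obtain \<mu> \<sigma> where d: "distributed M lborel (Y t) (normal_density \<mu> \<sigma>)" and sp: "\<sigma> > 0" by blast
    have i2: "integrable lborel (\<lambda>x. normal_density \<mu> \<sigma> x * (x - \<mu>) ^ 2)" using sp by (rule integrable_normal_moment)
    have i1: "integrable lborel (\<lambda>x. normal_density \<mu> \<sigma> x * (x - \<mu>) ^ 1)" using sp by (rule integrable_normal_moment)
    have i0: "integrable lborel (\<lambda>x. normal_density \<mu> \<sigma> x * (x - \<mu>) ^ 0)" using sp by (rule integrable_normal_moment)
    have "integrable lborel (\<lambda>x. normal_density \<mu> \<sigma> x * (x - \<mu>) ^ 2 + 2 * \<mu> * (normal_density \<mu> \<sigma> x * (x - \<mu>) ^ 1) + \<mu>\<^sup>2 * (normal_density \<mu> \<sigma> x * (x - \<mu>) ^ 0))"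
      using i0 i1 i2 by (intro Bochner_Integration.integrable_add integrable_mult_right)
    moreover have "(\<lambda>x. normal_density \<mu> \<sigma> x * (x - \<mu>) ^ 2 + 2 * \<mu> * (normal_density \<mu> \<sigma> x * (x - \<mu>) ^ 1) + \<mu>\<^sup>2 * (normal_density \<mu> \<sigma> x * (x - \<mu>) ^ 0))
      = (\<lambda>x. normal_density \<mu> \<sigma> x * (\<lambda>y. y\<^sup>2) x)"
      by (auto simp: power2_eq_square algebra_simps)
    ultimately have "integrable lborel (\<lambda>x. normal_density \<mu> \<sigma> x * (\<lambda>y. y\<^sup>2) x)" by simp
    then show ?thesis using distributed_integrable[OF d, of "\<lambda>y. y\<^sup>2"] by simp
  qed
  then show ?thesis using meas unfolding sqi_def by simp
qed

lemma dq_seq: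
  fixes f :: "real \<Rightarrow> real"
  assumes "(f has_real_derivative D) (at x within S)" "y \<longlonglongrightarrow> x" "\<And>m. y m \<in> S" "\<And>m. y m \<noteq> x"
  shows "(\<lambda>m. (f (y m) - f x) / (y m - x)) \<longlonglongrightarrow> D"
proof -
  have t: "((\<lambda>z. (f z - f x) / (z - x)) \<longlongrightarrow> D) (at x within S)"
    using assms(1) by (simp add: has_field_derivative_iff)
  have "filterlim y (at x within S) sequentially"
    unfolding filterlim_at using assms by auto
  from filterlim_compose[OF t this] show ?thesis .
qed


lemma K_incr:
  fixes rd :: "nat \<Rightarrow> nat \<Rightarrow> real \<Rightarrow> real \<Rightarrow> real" and C :: real
  assumes I: "is_interval I"
    and d01: "\<forall>s\<in>I. \<forall>t\<in>I. ((\<lambda>y. rd 0 0 s y) has_real_derivative rd 0 1 s t) (at t within I)"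
    and d11: "\<forall>s\<in>I. \<forall>t\<in>I. ((\<lambda>x. rd 0 1 x t) has_real_derivative rd 1 1 s t) (at s within I)"
    and bound: "\<forall>a\<le>1. \<forall>b\<le>1. \<forall>s\<in>I. \<forall>t\<in>I. \<bar>rd a b s t\<bar> \<le> C"
    and uv: "u \<in> I" "v \<in> I"
  shows "\<bar>rd 0 0 u u - rd 0 0 u v - rd 0 0 v u + rd 0 0 v v\<bar> \<le> C * (\<bar>u - v\<bar> * \<bar>u - v\<bar>)"
proof -
  define S where "S = {min u v .. max u v}"
  have cS: "convex S" unfolding S_def by simp
  have SI: "S \<subseteq> I"
  proof
    fix z assume "z \<in> S"
    then have "min u v \<le> z" "z \<le> max u v" unfolding S_def by auto
    moreover have "min u v \<in> I" "max u v \<in> I" using uv by (auto simp: min_def max_def)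
    ultimately show "z \<in> I" using mem_is_interval_1_I[OF I] by blast
  qed
  have uS: "u \<in> S" and vS: "v \<in> S" unfolding S_def by auto
  have inner: "\<bar>rd 0 1 u z - rd 0 1 v z\<bar> \<le> C * \<bar>u - v\<bar>" if "z \<in> S" for z
  proof -
    have zI: "z \<in> I" using that SI by auto
    have "norm (rd 0 1 u z - rd 0 1 v z) \<le> C * norm (u - v)"
    proof (rule field_differentiable_bound[OF cS _ _ uS vS])
      fix x assume "x \<in> S"
      then have xI: "x \<in> I" using SI by auto
      show "((\<lambda>x. rd 0 1 x z) has_field_derivative rd 1 1 x z) (at x within S)"
        using d11 xI zI SI by (auto intro: DERIV_subset)
      show "norm (rd 1 1 x z) \<le> C" using bound xI zI by auto
    qed
    then show ?thesis by simp
  qed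
  have "norm ((rd 0 0 u u - rd 0 0 v u) - (rd 0 0 u v - rd 0 0 v v)) \<le> (C * \<bar>u - v\<bar>) * norm (u - v)"
  proof (rule field_differentiable_bound[OF cS _ _ uS vS, where f = "\<lambda>y. rd 0 0 u y - rd 0 0 v y"])
    fix z assume "z \<in> S"
    then have zI: "z \<in> I" using SI by auto
    show "((\<lambda>y. rd 0 0 u y - rd 0 0 v y) has_field_derivative rd 0 1 u z - rd 0 1 v z) (at z within S)"
      using d01 zI uv SI by (auto intro!: DERIV_diff intro: DERIV_subset)
    show "norm (rd 0 1 u z - rd 0 1 v z) \<le> C * \<bar>u - v\<bar>" using inner[OF \<open>z \<in> S\<close>] by simp
  qed
  then show ?thesis by (simp add: algebra_simps)
qed

lemma sym10:
  fixes rd :: "nat \<Rightarrow> nat \<Rightarrow> real \<Rightarrow> real \<Rightarrow> real"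
  assumes I: "is_interval I" and pq: "p \<in> I" "q \<in> I" "p \<noteq> q"
    and Ksym: "\<And>u v. u \<in> I \<Longrightarrow> v \<in> I \<Longrightarrow> rd 0 0 u v = rd 0 0 v u"
    and d10: "\<forall>s\<in>I. \<forall>t\<in>I. ((\<lambda>x. rd 0 0 x t) has_real_derivative rd 1 0 s t) (at s within I)"
    and d01: "\<forall>s\<in>I. \<forall>t\<in>I. ((\<lambda>y. rd 0 0 s y) has_real_derivative rd 0 1 s t) (at t within I)"
    and uv: "u \<in> I" "v \<in> I"
  shows "rd 1 0 u v = rd 0 1 v u"
proof -
  have lp: "u islimpt I"
  proof (rule connected_imp_perfect[OF is_interval_connected[OF I] uv(1)])
    fix x show "I \<noteq> {x}" using pq by auto
  qed
  then have nt: "\<not> trivial_limit (at u within I)" by (simp add: trivial_limit_within)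
  have D1: "((\<lambda>x. rd 0 0 x v) has_real_derivative rd 1 0 u v) (at u within I)" using d10 uv by auto
  have D2: "((\<lambda>y. rd 0 0 v y) has_real_derivative rd 0 1 v u) (at u within I)" using d01 uv by auto
  have D3: "((\<lambda>x. rd 0 0 x v) has_real_derivative rd 0 1 v u) (at u within I)"
    by (rule has_field_derivative_transform_within[OF D2 zero_less_one uv(1)]) (use Ksym uv in auto)
  show ?thesis
    using tendsto_unique[OF nt D1[unfolded has_field_derivative_iff] D3[unfolded has_field_derivative_iff]] .
qed


lemma sym11:
  fixes M :: "'a measure" and I :: "real set" and Y :: "real \<Rightarrow> 'a \<Rightarrow> real"
    and rd :: "nat \<Rightarrow> nat \<Rightarrow> real \<Rightarrow> real \<Rightarrow> real" and C :: real
  assumes ps: "prob_space M" and I: "is_interval I" and gp: "gaussian_process M I Y"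
    and cov: "\<forall>s\<in>I. \<forall>t\<in>I. rd 0 0 s t = (\<integral>\<omega>. Y s \<omega> * Y t \<omega> \<partial>M)"
    and d10: "\<forall>s\<in>I. \<forall>t\<in>I. ((\<lambda>x. rd 0 0 x t) has_real_derivative rd 1 0 s t) (at s within I)"
    and d01: "\<forall>s\<in>I. \<forall>t\<in>I. ((\<lambda>y. rd 0 0 s y) has_real_derivative rd 0 1 s t) (at t within I)"
    and d11: "\<forall>s\<in>I. \<forall>t\<in>I. ((\<lambda>x. rd 0 1 x t) has_real_derivative rd 1 1 s t) (at s within I)"
    and bound: "\<forall>a\<le>1. \<forall>b\<le>1. \<forall>s\<in>I. \<forall>t\<in>I. \<bar>rd a b s t\<bar> \<le> C"
    and pq: "p \<in> I" "q \<in> I" "p < q"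
  shows "rd 1 1 p q = rd 1 1 q p"
proof -
  have sq: "\<And>u. u \<in> I \<Longrightarrow> sqi M (Y u)" using gauss_sqi[OF ps gp] .
  have ipK: "\<And>u v. u \<in> I \<Longrightarrow> v \<in> I \<Longrightarrow> ip M (Y u) (Y v) = rd 0 0 u v" using cov unfolding ip_def by auto
  have Ksym: "\<And>u v. u \<in> I \<Longrightarrow> v \<in> I \<Longrightarrow> rd 0 0 u v = rd 0 0 v u" using cov by (simp add: mult.commute)
  have s10: "\<And>u v. u \<in> I \<Longrightarrow> v \<in> I \<Longrightarrow> rd 1 0 u v = rd 0 1 v u"
    using sym10[OF I pq(1,2) _ Ksym d10 d01] pq(3) by auto
  define \<delta> where "\<delta> = q - p"
  have \<delta>: "\<delta> > 0" using pq unfolding \<delta>_def by simp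
  define h where "h = (\<lambda>n::nat. \<delta> / real (n + 2))"
  define k where "k = (\<lambda>m::nat. - (\<delta> / real (m + 2)))"
  have hpos: "h n > 0" for n unfolding h_def using \<delta> by simp
  have hle: "h n \<le> \<delta>" for n unfolding h_def using \<delta> by (simp add: divide_le_eq)
  have kneg: "k m < 0" for m unfolding k_def using \<delta> by simp
  have kle: "- k m \<le> \<delta>" for m unfolding k_def using \<delta> by (simp add: divide_le_eq)
  have hI: "p + h n \<in> I" for n
    using mem_is_interval_1_I[OF I pq(1) pq(2), of "p + h n"] hpos[of n] hle[of n] unfolding \<delta>_def by simp
  have kI: "q + k m \<in> I" for m
    using mem_is_interval_1_I[OF I pq(1) pq(2), of "q + k m"] kneg[of m] kle[of m] unfolding \<delta>_def by simp
  have inv0: "(\<lambda>n. inverse (real (Suc (Suc n)))) \<longlonglongrightarrow> 0"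
    by (rule LIMSEQ_Suc[OF LIMSEQ_inverse_real_of_nat])
  have h0: "h \<longlonglongrightarrow> 0"
  proof -
    have "(\<lambda>n. \<delta> * inverse (real (Suc (Suc n)))) \<longlonglongrightarrow> \<delta> * 0" by (intro tendsto_intros inv0)
    moreover have "h = (\<lambda>n. \<delta> * inverse (real (Suc (Suc n))))" unfolding h_def by (auto simp: divide_inverse)
    ultimately show ?thesis by simp
  qed
  have k0: "k \<longlonglongrightarrow> 0"
  proof -
    have "(\<lambda>n. - (\<delta> * inverse (real (Suc (Suc n))))) \<longlonglongrightarrow> - (\<delta> * 0)" by (intro tendsto_intros inv0)
    moreover have "k = (\<lambda>n. - (\<delta> * inverse (real (Suc (Suc n)))))" unfolding k_def by (auto simp: divide_inverse)
    ultimately show ?thesis by simp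
  qed
  have ph: "(\<lambda>n. p + h n) \<longlonglongrightarrow> p" using tendsto_add[OF tendsto_const h0, of p] by simp
  have qk: "(\<lambda>m. q + k m) \<longlonglongrightarrow> q" using tendsto_add[OF tendsto_const k0, of q] by simp
  have phne: "p + h n \<noteq> p" for n using hpos[of n] by simp
  have qkne: "q + k m \<noteq> q" for m using kneg[of m] by simp
  define a where "a = (\<lambda>n \<omega>. (Y (p + h n) \<omega> - Y p \<omega>) / h n)"
  define b where "b = (\<lambda>m \<omega>. (Y (q + k m) \<omega> - Y q \<omega>) / k m)"
  have sa: "sqi M (a n)" for n unfolding a_def by (intro sqi_divide sqi_diff sq hI pq)
  have sb: "sqi M (b m)" for m unfolding b_def by (intro sqi_divide sqi_diff sq kI pq)
  have ipab: "ip M (a n) (b m) = (rd 0 0 (p + h n) (q + k m) - rd 0 0 (p + h n) q - rd 0 0 p (q + k m) + rd 0 0 p q) / (h n * k m)" for n m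
    unfolding a_def b_def by (simp add: ip_quad sq hI kI pq ipK)
  define A where "A = (\<lambda>n. (rd 0 1 (p + h n) q - rd 0 1 p q) / h n)"
  define B where "B = (\<lambda>m. (rd 1 0 p (q + k m) - rd 1 0 p q) / k m)"
  have lA: "(\<lambda>m. ip M (a n) (b m)) \<longlonglongrightarrow> A n" for n
  proof -
    have e: "ip M (a n) (b m) = ((rd 0 0 (p + h n) (q + k m) - rd 0 0 (p + h n) q) / ((q + k m) - q)
       - (rd 0 0 p (q + k m) - rd 0 0 p q) / ((q + k m) - q)) / h n" for m
      unfolding ipab using hpos[of n] kneg[of m] by (simp add: field_simps)
    have l1: "(\<lambda>m. (rd 0 0 (p + h n) (q + k m) - rd 0 0 (p + h n) q) / ((q + k m) - q)) \<longlonglongrightarrow> rd 0 1 (p + h n) q"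
      by (rule dq_seq[OF _ qk kI qkne]) (use d01 hI pq in auto)
    have l2: "(\<lambda>m. (rd 0 0 p (q + k m) - rd 0 0 p q) / ((q + k m) - q)) \<longlonglongrightarrow> rd 0 1 p q"
      by (rule dq_seq[OF _ qk kI qkne]) (use d01 hI pq in auto)
    show ?thesis unfolding e A_def using hpos[of n] by (intro tendsto_intros l1 l2) auto
  qed
  have lA1: "A \<longlonglongrightarrow> rd 1 1 p q"
  proof -
    have "(\<lambda>n. (rd 0 1 (p + h n) q - rd 0 1 p q) / ((p + h n) - p)) \<longlonglongrightarrow> rd 1 1 p q"
      by (rule dq_seq[OF _ ph hI phne]) (use d11 pq in auto)
    then show ?thesis unfolding A_def by simp
  qed
  have lB: "(\<lambda>n. ip M (a n) (b m)) \<longlonglongrightarrow> B m" for m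
  proof -
    have e: "ip M (a n) (b m) = ((rd 0 0 (p + h n) (q + k m) - rd 0 0 p (q + k m)) / ((p + h n) - p)
       - (rd 0 0 (p + h n) q - rd 0 0 p q) / ((p + h n) - p)) / k m" for n
      unfolding ipab using hpos[of n] kneg[of m] by (simp add: field_simps)
    have l1: "(\<lambda>n. (rd 0 0 (p + h n) (q + k m) - rd 0 0 p (q + k m)) / ((p + h n) - p)) \<longlonglongrightarrow> rd 1 0 p (q + k m)"
      by (rule dq_seq[OF _ ph hI phne, where f = "\<lambda>x. rd 0 0 x (q + k m)"]) (use d10 kI pq in auto)
    have l2: "(\<lambda>n. (rd 0 0 (p + h n) q - rd 0 0 p q) / ((p + h n) - p)) \<longlonglongrightarrow> rd 1 0 p q"
      by (rule dq_seq[OF _ ph hI phne, where f = "\<lambda>x. rd 0 0 x q"]) (use d10 pq in auto)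
    show ?thesis unfolding e B_def using kneg[of m] by (intro tendsto_intros l1 l2) auto
  qed
  have lB1: "B \<longlonglongrightarrow> rd 1 1 q p"
  proof -
    have "(\<lambda>m. (rd 0 1 (q + k m) p - rd 0 1 q p) / ((q + k m) - q)) \<longlonglongrightarrow> rd 1 1 q p"
      by (rule dq_seq[OF _ qk kI qkne]) (use d11 pq in auto)
    moreover have "B = (\<lambda>m. (rd 0 1 (q + k m) p - rd 0 1 q p) / ((q + k m) - q))"
      unfolding B_def using s10 kI pq by auto
    ultimately show ?thesis by simp
  qed
  have ba: "ip M (a n) (a n) \<le> C" for n
  proof -
    have e: "ip M (a n) (a n) = (rd 0 0 (p + h n) (p + h n) - rd 0 0 (p + h n) p - rd 0 0 p (p + h n) + rd 0 0 p p) / (h n * h n)"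
      unfolding a_def by (simp add: ip_quad sq hI pq ipK)
    have "\<bar>rd 0 0 (p + h n) (p + h n) - rd 0 0 (p + h n) p - rd 0 0 p (p + h n) + rd 0 0 p p\<bar> \<le> C * (\<bar>(p + h n) - p\<bar> * \<bar>(p + h n) - p\<bar>)"
      by (rule K_incr[OF I d01 d11 bound hI pq(1)])
    also have "\<dots> = C * (h n * h n)" using hpos[of n] by simp
    finally have "rd 0 0 (p + h n) (p + h n) - rd 0 0 (p + h n) p - rd 0 0 p (p + h n) + rd 0 0 p p \<le> C * (h n * h n)" by simp
    moreover have "h n * h n > 0" using hpos[of n] by simp
    ultimately show ?thesis unfolding e by (simp add: pos_divide_le_eq)
  qed
  have bb: "ip M (b m) (b m) \<le> C" for m
  proof -
    have e: "ip M (b m) (b m) = (rd 0 0 (q + k m) (q + k m) - rd 0 0 (q + k m) q - rd 0 0 q (q + k m) + rd 0 0 q q) / (k m * k m)"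
      unfolding b_def by (simp add: ip_quad sq kI pq ipK)
    have "\<bar>rd 0 0 (q + k m) (q + k m) - rd 0 0 (q + k m) q - rd 0 0 q (q + k m) + rd 0 0 q q\<bar> \<le> C * (\<bar>(q + k m) - q\<bar> * \<bar>(q + k m) - q\<bar>)"
      by (rule K_incr[OF I d01 d11 bound kI pq(2)])
    also have "\<dots> = C * (k m * k m)" using kneg[of m] by simp
    finally have "rd 0 0 (q + k m) (q + k m) - rd 0 0 (q + k m) q - rd 0 0 q (q + k m) + rd 0 0 q q \<le> C * (k m * k m)" by simp
    moreover have "k m * k m > 0" using kneg[of m] by (simp add: zero_less_mult_iff)
    ultimately show ?thesis unfolding e by (simp add: pos_divide_le_eq)
  qed
  show ?thesis by (rule core[OF sa sb ba bb lA lA1 lB lB1])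
qed


lemma UNIV_4: "(UNIV :: 4 set) = {1,2,3,4}"
  using exhaust_4 by auto
lemma vector_4:
 "(vector [x,y,z,w] ::('a::zero)^4)$1 = x"
 "(vector [x,y,z,w] ::('a::zero)^4)$2 = y"
 "(vector [x,y,z,w] ::('a::zero)^4)$3 = z"
 "(vector [x,y,z,w] ::('a::zero)^4)$4 = w"
  unfolding vector_def by simp_all
lemma det_4:
  "det (A::'a::comm_ring_1^4^4) =
   A$1$1 * (A$2$2 * A$3$3 * A$4$4 + A$2$3 * A$3$4 * A$4$2 + A$2$4 * A$3$2 * A$4$3
          - A$2$2 * A$3$4 * A$4$3 - A$2$3 * A$3$2 * A$4$4 - A$2$4 * A$3$3 * A$4$2)
 - A$1$2 * (A$2$1 * A$3$3 * A$4$4 + A$2$3 * A$3$4 * A$4$1 + A$2$4 * A$3$1 * A$4$3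
          - A$2$1 * A$3$4 * A$4$3 - A$2$3 * A$3$1 * A$4$4 - A$2$4 * A$3$3 * A$4$1)
 + A$1$3 * (A$2$1 * A$3$2 * A$4$4 + A$2$2 * A$3$4 * A$4$1 + A$2$4 * A$3$1 * A$4$2
          - A$2$1 * A$3$4 * A$4$2 - A$2$2 * A$3$1 * A$4$4 - A$2$4 * A$3$2 * A$4$1)
 - A$1$4 * (A$2$1 * A$3$2 * A$4$3 + A$2$2 * A$3$3 * A$4$1 + A$2$3 * A$3$1 * A$4$2
          - A$2$1 * A$3$3 * A$4$2 - A$2$2 * A$3$1 * A$4$3 - A$2$3 * A$3$2 * A$4$1)"
proof -
  have f1: "finite {2::4, 3, 4}" "1 \<notin> {2::4, 3, 4}" by auto
  have f2: "finite {3::4, 4}" "2 \<notin> {3::4, 4}" by auto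
  have f3: "finite {4::4}" "3 \<notin> {4::4}" by auto
  show ?thesis
    unfolding det_def UNIV_4
    unfolding sum_over_permutations_insert[OF f1]
    unfolding sum_over_permutations_insert[OF f2]
    unfolding sum_over_permutations_insert[OF f3]
    unfolding permutes_sing
    by (simp add: sign_swap_id permutation_swap_id sign_compose permutation_compose sign_id swap_id_eq algebra_simps)
qed
lemma alg4:
  fixes a1 a2 a3 a4 d1 d2 d3 d4 x1 x2 x3 x4 y1 y2 y3 y4 C M :: real
  assumes "\<bar>a1\<bar> \<le> C" "\<bar>a2\<bar> \<le> C" "\<bar>a3\<bar> \<le> C" "\<bar>a4\<bar> \<le> C"
    "\<bar>d1\<bar> \<le> C" "\<bar>d2\<bar> \<le> C" "\<bar>d3\<bar> \<le> C" "\<bar>d4\<bar> \<le> C"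
    "\<bar>x1\<bar> \<le> M" "\<bar>x2\<bar> \<le> M" "\<bar>x3\<bar> \<le> M" "\<bar>x4\<bar> \<le> M"
    "\<bar>y1\<bar> \<le> M" "\<bar>y2\<bar> \<le> M" "\<bar>y3\<bar> \<le> M" "\<bar>y4\<bar> \<le> M"
    and MC: "M \<le> C"
  shows "\<bar>det (vector [vector [a1,x1,a2,x2], vector [y1,d1,y2,d2], vector [a3,x3,a4,x4], vector [y3,d3,y4,d4]] :: real^4^4)
     - (a1 * a4 - a2 * a3) * (d1 * d4 - d2 * d3)\<bar> \<le> 20 * C\<^sup>2 * M\<^sup>2"
proof -
  have M0: "0 \<le> M" using assms(9) by linarith
  have hC: "\<bar>u * v * w * z\<bar> \<le> C\<^sup>2 * M\<^sup>2" if "\<bar>u\<bar> \<le> C" "\<bar>v\<bar> \<le> C" "\<bar>w\<bar> \<le> M" "\<bar>z\<bar> \<le> M" for u v w z :: real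
  proof -
    have "\<bar>u * v * w * z\<bar> = \<bar>u\<bar> * \<bar>v\<bar> * (\<bar>w\<bar> * \<bar>z\<bar>)" by (simp add: abs_mult)
    also have "\<dots> \<le> C * C * (M * M)"
      using that by (intro mult_mono) (auto intro: mult_mono)
    finally show ?thesis by (simp add: power2_eq_square)
  qed
  have hM: "\<bar>u * v * w * z\<bar> \<le> C\<^sup>2 * M\<^sup>2" if "\<bar>u\<bar> \<le> M" "\<bar>v\<bar> \<le> M" "\<bar>w\<bar> \<le> M" "\<bar>z\<bar> \<le> M" for u v w z :: real
    using hC[of u v w z] that MC by auto
  have E: "det (vector [vector [a1,x1,a2,x2], vector [y1,d1,y2,d2], vector [a3,x3,a4,x4], vector [y3,d3,y4,d4]] :: real^4^4) - (a1 * a4 - a2 * a3) * (d1 * d4 - d2 * d3) = - a1*d1*x4*y4 - a1*d4*x3*y2 + a1*d3*x4*y2 + a1*d2*x3*y4 - a4*d4*x1*y1 + x1*x4*y1*y4 + a3*d4*x1*y2 - x1*x4*y2*y3 - a3*d2*x1*y4 + a4*d2*x1*y3 + a2*d4*x3*y1 - a2*d3*x4*y1 + a2*d1*x4*y3 - a2*d2*x3*y3 - x2*x3*y1*y4 + a4*d3*x2*y1 + a3*d1*x2*y4 - a4*d1*x2*y3 - a3*d3*x2*y2 + x2*x3*y2*y3"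
    unfolding det_4 vector_4 by (simp add: algebra_simps)
  have F: "K \<le> C\<^sup>2 * M\<^sup>2 \<Longrightarrow> -K \<le> C\<^sup>2 * M\<^sup>2 \<Longrightarrow> \<bar>K\<bar> \<le> C\<^sup>2 * M\<^sup>2" for K :: real by linarith
  note G = hC[OF assms(1) assms(5) assms(12) assms(16)] hC[OF assms(1) assms(8) assms(11) assms(14)] hC[OF assms(1) assms(7) assms(12) assms(14)] hC[OF assms(1) assms(6) assms(11) assms(16)] hC[OF assms(4) assms(8) assms(9) assms(13)] hM[OF assms(9) assms(12) assms(13) assms(16)] hC[OF assms(3) assms(8) assms(9) assms(14)] hM[OF assms(9) assms(12) assms(14) assms(15)] hC[OF assms(3) assms(6) assms(9) assms(16)] hC[OF assms(4) assms(6) assms(9) assms(15)] hC[OF assms(2) assms(8) assms(11) assms(13)] hC[OF assms(2) assms(7) assms(12) assms(13)] hC[OF assms(2) assms(5) assms(12) assms(15)] hC[OF assms(2) assms(6) assms(11) assms(15)] hM[OF assms(10) assms(11) assms(13) assms(16)] hC[OF assms(4) assms(7) assms(10) assms(13)] hC[OF assms(3) assms(5) assms(10) assms(16)] hC[OF assms(4) assms(5) assms(10) assms(15)] hC[OF assms(3) assms(7) assms(10) assms(14)] hM[OF assms(10) assms(11) assms(14) assms(15)]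
  note H = G[unfolded abs_le_iff]
  show ?thesis unfolding E abs_le_iff
    using H by linarith
qed

theorem lemma9:
  fixes M :: "'a measure" and I :: "real set" and Y :: "real \<Rightarrow> 'a \<Rightarrow> real"
    and rd :: "nat \<Rightarrow> nat \<Rightarrow> real \<Rightarrow> real \<Rightarrow> real" and C s \<tau> :: real
  assumes "prob_space M"
    and "is_interval I"
    and "gaussian_process M I Y"
    and centered: "\<forall>t\<in>I. integrable M (Y t) \<and> (\<integral>\<omega>. Y t \<omega> \<partial>M) = 0"
    and cov: "\<forall>s\<in>I. \<forall>t\<in>I. rd 0 0 s t = (\<integral>\<omega>. Y s \<omega> * Y t \<omega> \<partial>M)"
    and d10: "\<forall>s\<in>I. \<forall>t\<in>I. ((\<lambda>x. rd 0 0 x t) has_real_derivative rd 1 0 s t) (at s within I)"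
    and d01: "\<forall>s\<in>I. \<forall>t\<in>I. ((\<lambda>y. rd 0 0 s y) has_real_derivative rd 0 1 s t) (at t within I)"
    and d11: "\<forall>s\<in>I. \<forall>t\<in>I. ((\<lambda>x. rd 0 1 x t) has_real_derivative rd 1 1 s t) (at s within I)"
    and bound: "\<forall>a\<le>1. \<forall>b\<le>1. \<forall>s\<in>I. \<forall>t\<in>I. \<bar>rd a b s t\<bar> \<le> C"
    and "s \<in> I" and "s + \<tau> \<in> I"
  shows "\<bar>det (Sigma rd s (s + \<tau>)) - det (Omega rd s) * det (Omega rd (s + \<tau>))\<bar>
           \<le> 20 * C\<^sup>2 * (Mtau rd I \<tau>)\<^sup>2"
proof -
  define t where "t = s + \<tau>"
  have sI: "s \<in> I" and tI: "t \<in> I" using assms unfolding t_def by auto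
  define Mt where "Mt = Mtau rd I \<tau>"
  define S where "S = {\<bar>rd a b s (s + \<tau>)\<bar> | a b s. a \<le> 1 \<and> b \<le> 1 \<and> s \<in> I \<and> s + \<tau> \<in> I}"
  have MtS: "Mt = Sup S" unfolding Mt_def Mtau_def S_def by simp
  have bddS: "bdd_above S" unfolding S_def using bound by (auto intro!: bdd_aboveI[of _ C])
  have Mup: "\<bar>rd a b s t\<bar> \<le> Mt" if "a \<le> 1" "b \<le> 1" for a b
  proof -
    have "\<bar>rd a b s t\<bar> \<in> S" unfolding S_def t_def using that sI tI[unfolded t_def] by blast
    then show ?thesis unfolding MtS by (rule cSup_upper[OF _ bddS])
  qed
  have MC: "Mt \<le> C"
  proof -
    have "\<bar>rd 0 0 s t\<bar> \<in> S" unfolding S_def t_def using sI tI[unfolded t_def] by blast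
    then have "S \<noteq> {}" by auto
    moreover have "\<forall>x\<in>S. x \<le> C" unfolding S_def using bound by auto
    ultimately show ?thesis unfolding MtS by (intro cSup_least) auto
  qed
  have Ksym: "\<And>u v. u \<in> I \<Longrightarrow> v \<in> I \<Longrightarrow> rd 0 0 u v = rd 0 0 v u" using cov by (simp add: mult.commute)
  have rev: "\<bar>rd 0 0 t s\<bar> \<le> Mt \<and> \<bar>rd 0 1 t s\<bar> \<le> Mt \<and> \<bar>rd 1 0 t s\<bar> \<le> Mt \<and> \<bar>rd 1 1 t s\<bar> \<le> Mt"
  proof (cases "t = s")
    case True
    then show ?thesis using Mup[of 0 0] Mup[of 0 1] Mup[of 1 0] Mup[of 1 1] by simp
  next
    case False
    have s10: "rd 1 0 u v = rd 0 1 v u" if "u \<in> I" "v \<in> I" for u v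
      using sym10[OF assms(2) sI tI _ Ksym d10 d01 that] False by auto
    have s11: "rd 1 1 t s = rd 1 1 s t"
    proof (cases "s < t")
      case True
      show ?thesis using sym11[OF assms(1,2,3) cov d10 d01 d11 bound sI tI True] by simp
    next
      case F2: False
      then have "t < s" using False by simp
      show ?thesis using sym11[OF assms(1,2,3) cov d10 d01 d11 bound tI sI \<open>t < s\<close>] by simp
    qed
    have "rd 0 0 t s = rd 0 0 s t" using Ksym sI tI by simp
    moreover have "rd 0 1 t s = rd 1 0 s t" using s10[OF sI tI] by simp
    moreover have "rd 1 0 t s = rd 0 1 s t" using s10[OF tI sI] by simp
    ultimately show ?thesis using s11 Mup[of 0 0] Mup[of 0 1] Mup[of 1 0] Mup[of 1 1] by simp
  qed
  have bC: "\<bar>rd a b u v\<bar> \<le> C" if "a \<le> 1" "b \<le> 1" "u \<in> I" "v \<in> I" for a b u v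
    using bound that by blast
  have "\<bar>det (vector [vector [rd 0 0 s s, rd 0 0 s t, rd 0 1 s s, rd 0 1 s t],
      vector [rd 0 0 t s, rd 0 0 t t, rd 0 1 t s, rd 0 1 t t],
      vector [rd 1 0 s s, rd 1 0 s t, rd 1 1 s s, rd 1 1 s t],
      vector [rd 1 0 t s, rd 1 0 t t, rd 1 1 t s, rd 1 1 t t]] :: real^4^4)
     - (rd 0 0 s s * rd 1 1 s s - rd 0 1 s s * rd 1 0 s s) * (rd 0 0 t t * rd 1 1 t t - rd 0 1 t t * rd 1 0 t t)\<bar>
     \<le> 20 * C\<^sup>2 * Mt\<^sup>2"
    by (rule alg4) (use bC[OF _ _ sI sI] bC[OF _ _ tI tI] Mup rev MC in auto)
  then show ?thesis unfolding Sigma_def Omega_def det_2 vector_2 t_def Mt_def by simp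
qed

end
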